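(* Let $G\in\mathcal{C}$ and $N\unlhd G$. For each vertex $v$ of $\mathcal{G}_N$ there is a unique directed path in $\mathcal{G}_N$ from $(G,N,1_N)$ to $v$.
   Context: All groups are finite. $\mathcal{C}$ is the class of finite groups $G$ such that every subgroup and quotient group of $G$ is either abelian or contains a non-central abelian normal subgroup. $\psi^x(g)=\psi(xgx^{-1})$, $\psi^G$ induced character, $1_N$ trivial character. An $N$-linear character triple of $G$ is $(H,A,\vartheta)$ with $H\le G$, $A\unlhd H$, $\vartheta$ a linear character of $A$ invariant in $H$, and $\ker(\vartheta^G)=N$. For $B\unlhd M\le G$ and linear $\lambda$ on $B$, $\widetilde{\operatorname{Lin}}(M|\lambda)$ is the set of linear characters of $M$ whose restriction to $B$ contains $\lambda$ and whose induction to $G$ has kernel $N$. For each triple a normal subgroup $\mathcal{A}=\mathcal{A}_{(H,A,\vartheta)}$ of $H$ is fixed, of maximal order among normal subgroups of $H$ containing $\ker\vartheta$ with abelian quotient by $\ker\vartheta$. $\operatorname{Aut}(\mathbb{C}|\vartheta)\times H$ (field automorphisms of $\mathbb{C}$ fixing $\mathbb{Q}(\vartheta)$, times $H$) acts on $\widetilde{\operatorname{Lin}}(\mathcal{A}|\vartheta)$ by $(\sigma,h)\cdot\varphi=\sigma\circ\varphi^h$; fix orbit representatives $\mathfrak{Lin}(\mathcal{A}|\vartheta)$. If $H\neq A$, $Cl(H,A,\vartheta)=\{(I_H(\varphi),\mathcal{A},\varphi):\varphi\in\mathfrak{Lin}(\mathcal{A}|\vartheta)\}$ with $I_H(\varphi)=\{h\in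 H:\varphi^h=\varphi\}$; if $H=A$, $Cl(H,A,\vartheta)=\emptyset$. $\mathcal{G}_N$ is the directed graph whose vertices are the $N$-linear character triples $v$ reachable by a directed path from $(G,N,1_N)$ in the graph with an edge $(u,v)$ iff $v\in Cl(u)$, and whose edges are the edges of that graph between its vertices. *)

theory Defs
  imports "HOL-Algebra.Algebra" Complex_Main
begin

definition grp_center :: "('a,'b) monoid_scheme \<Rightarrow> 'a set" where
  "grp_center Y = {z \<in> carrier Y. \<forall>x\<in>carrier Y. monoid.mult Y z x = monoid.mult Y x z}"

definition abelian_or_noncentral_abelian_normal :: "('a,'b) monoid_scheme \<Rightarrow> bool" where
  "abelian_or_noncentral_abelian_normal Y \<longleftrightarrow>
     comm_group Y \<or>
     (\<exists>B. B \<lhd> Y \<and> comm_group (Y\<lparr>carrier := B\<rparr>) \<and> \<not> B \<subseteq> grp_center Y)"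

definition class_C :: "('a,'b) monoid_scheme \<Rightarrow> bool" where
  "class_C G \<longleftrightarrow> group G \<and> finite (carrier G) \<and>
     (\<forall>H. subgroup H G \<longrightarrow> abelian_or_noncentral_abelian_normal (G\<lparr>carrier := H\<rparr>)) \<and>
     (\<forall>K. K \<lhd> G \<longrightarrow> abelian_or_noncentral_abelian_normal (G Mod K))"

definition lin_char :: "('a,'b) monoid_scheme \<Rightarrow> 'a set \<Rightarrow> ('a \<Rightarrow> complex) \<Rightarrow> bool" where
  "lin_char G A \<theta> \<longleftrightarrow>
     (\<forall>x\<in>A. \<theta> x \<noteq> 0) \<and>
     (\<forall>x\<in>A. \<forall>y\<in>A. \<theta> (monoid.mult G x y) = \<theta> x * \<theta> y) \<and>
     (\<forall>x. x \<notin> A \<longrightarrow> \<theta> x = 0)"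

definition lin_ker :: "'a set \<Rightarrow> ('a \<Rightarrow> complex) \<Rightarrow> 'a set" where
  "lin_ker A \<theta> = {a \<in> A. \<theta> a = 1}"

definition trivial_char :: "'a set \<Rightarrow> 'a \<Rightarrow> complex" where
  "trivial_char N = (\<lambda>x. if x \<in> N then 1 else 0)"

text \<open>Induced class function psi^G, where psi is a class function on H (zero outside H).\<close>
definition induced :: "('a,'b) monoid_scheme \<Rightarrow> 'a set \<Rightarrow> ('a \<Rightarrow> complex) \<Rightarrow> 'a \<Rightarrow> complex" where
  "induced G H \<psi> g = (if g \<in> carrier G then
      (1 / of_nat (card H)) * (\<Sum>x\<in>carrier G. \<psi> (monoid.mult G (monoid.mult G x g) (m_inv G x)))
    else 0)"

definition char_kernel :: "('a,'b) monoid_scheme \<Rightarrow> ('a \<Rightarrow> complex) \<Rightarrow> 'a set" where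
  "char_kernel G chr = {g \<in> carrier G. chr g = chr (monoid.one G)}"

definition conj_char :: "('a,'b) monoid_scheme \<Rightarrow> 'a set \<Rightarrow> 'a \<Rightarrow> ('a \<Rightarrow> complex) \<Rightarrow> 'a \<Rightarrow> complex" where
  "conj_char G A x \<psi> = (\<lambda>g. if g \<in> A then \<psi> (monoid.mult G (monoid.mult G x g) (m_inv G x)) else 0)"

type_synonym 'a triple = "'a set \<times> 'a set \<times> ('a \<Rightarrow> complex)"

definition N_linear_triple :: "('a,'b) monoid_scheme \<Rightarrow> 'a set \<Rightarrow> 'a triple \<Rightarrow> bool" where
  "N_linear_triple G N t \<longleftrightarrow> (case t of (H, A, \<theta>) \<Rightarrow>
      subgroup H G \<and> A \<lhd> (G\<lparr>carrier := H\<rparr>) \<and> lin_char G A \<theta> \<and>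
      (\<forall>h\<in>H. conj_char G A h \<theta> = \<theta>) \<and>
      char_kernel G (induced G A \<theta>) = N)"

definition Lin_tilde :: "('a,'b) monoid_scheme \<Rightarrow> 'a set \<Rightarrow> 'a set \<Rightarrow> 'a set \<Rightarrow> ('a \<Rightarrow> complex)
    \<Rightarrow> ('a \<Rightarrow> complex) set" where
  "Lin_tilde G N B M lam = {\<phi>. lin_char G M \<phi> \<and> B \<subseteq> M \<and> (\<forall>b\<in>B. \<phi> b = lam b) \<and>
      char_kernel G (induced G M \<phi>) = N}"

definition calA_candidate :: "('a,'b) monoid_scheme \<Rightarrow> 'a triple \<Rightarrow> 'a set \<Rightarrow> bool" where
  "calA_candidate G t K \<longleftrightarrow> (case t of (H, A, \<theta>) \<Rightarrow>
      K \<lhd> (G\<lparr>carrier := H\<rparr>) \<and> lin_ker A \<theta> \<subseteq> K \<and>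
      comm_group ((G\<lparr>carrier := K\<rparr>) Mod (lin_ker A \<theta>)))"

definition is_calA :: "('a,'b) monoid_scheme \<Rightarrow> 'a triple \<Rightarrow> 'a set \<Rightarrow> bool" where
  "is_calA G t K \<longleftrightarrow> calA_candidate G t K \<and>
      (\<forall>K'. calA_candidate G t K' \<longrightarrow> card K' \<le> card K)"

definition field_aut :: "(complex \<Rightarrow> complex) \<Rightarrow> bool" where
  "field_aut \<sigma> \<longleftrightarrow> bij \<sigma> \<and> (\<forall>x y. \<sigma> (x + y) = \<sigma> x + \<sigma> y) \<and> (\<forall>x y. \<sigma> (x * y) = \<sigma> x * \<sigma> y)"

text \<open>Aut(C | theta): field automorphisms of C fixing Q(theta), i.e. fixing every value of theta
  (an automorphism fixes the field Q(theta) pointwise iff it fixes its generators).\<close>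
definition Aut_fix :: "'a set \<Rightarrow> ('a \<Rightarrow> complex) \<Rightarrow> (complex \<Rightarrow> complex) set" where
  "Aut_fix A \<theta> = {\<sigma>. field_aut \<sigma> \<and> (\<forall>a\<in>A. \<sigma> (\<theta> a) = \<theta> a)}"

definition act :: "('a,'b) monoid_scheme \<Rightarrow> 'a set \<Rightarrow> (complex \<Rightarrow> complex) \<Rightarrow> 'a \<Rightarrow> ('a \<Rightarrow> complex)
    \<Rightarrow> 'a \<Rightarrow> complex" where
  "act G K \<sigma> h \<phi> = \<sigma> \<circ> conj_char G K h \<phi>"

definition orbit_reps :: "('a,'b) monoid_scheme \<Rightarrow> 'a set \<Rightarrow> 'a set \<Rightarrow> ('a \<Rightarrow> complex) \<Rightarrow> 'a set
    \<Rightarrow> ('a \<Rightarrow> complex) set \<Rightarrow> ('a \<Rightarrow> complex) set \<Rightarrow> bool" where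
  "orbit_reps G H A \<theta> K S R \<longleftrightarrow> R \<subseteq> S \<and>
     (\<forall>\<phi>\<in>S. \<exists>!\<psi>. \<psi> \<in> R \<and> (\<exists>\<sigma>\<in>Aut_fix A \<theta>. \<exists>h\<in>H. \<psi> = act G K \<sigma> h \<phi>))"

definition inertia :: "('a,'b) monoid_scheme \<Rightarrow> 'a set \<Rightarrow> 'a set \<Rightarrow> ('a \<Rightarrow> complex) \<Rightarrow> 'a set" where
  "inertia G H K \<phi> = {h \<in> H. conj_char G K h \<phi> = \<phi>}"

definition admissible_choice :: "('a,'b) monoid_scheme \<Rightarrow> 'a set \<Rightarrow> ('a triple \<Rightarrow> 'a set)
    \<Rightarrow> ('a triple \<Rightarrow> ('a \<Rightarrow> complex) set) \<Rightarrow> bool" where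
  "admissible_choice G N cA Rep \<longleftrightarrow>
     (\<forall>H A \<theta>. N_linear_triple G N (H, A, \<theta>) \<longrightarrow>
        is_calA G (H, A, \<theta>) (cA (H, A, \<theta>)) \<and>
        orbit_reps G H A \<theta> (cA (H, A, \<theta>)) (Lin_tilde G N A (cA (H, A, \<theta>)) \<theta>) (Rep (H, A, \<theta>)))"

definition Cl :: "('a,'b) monoid_scheme \<Rightarrow> ('a triple \<Rightarrow> 'a set) \<Rightarrow> ('a triple \<Rightarrow> ('a \<Rightarrow> complex) set)
    \<Rightarrow> 'a triple \<Rightarrow> 'a triple set" where
  "Cl G cA Rep t = (case t of (H, A, \<theta>) \<Rightarrow>
      if H = A then {} else (\<lambda>\<phi>. (inertia G H (cA t) \<phi>, cA t, \<phi>)) ` Rep t)"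

definition root_triple :: "('a,'b) monoid_scheme \<Rightarrow> 'a set \<Rightarrow> 'a triple" where
  "root_triple G N = (carrier G, N, trivial_char N)"

definition Cl_edges :: "('a,'b) monoid_scheme \<Rightarrow> 'a set \<Rightarrow> ('a triple \<Rightarrow> 'a set)
    \<Rightarrow> ('a triple \<Rightarrow> ('a \<Rightarrow> complex) set) \<Rightarrow> ('a triple \<times> 'a triple) set" where
  "Cl_edges G N cA Rep = {(u, v). N_linear_triple G N u \<and> N_linear_triple G N v \<and> v \<in> Cl G cA Rep u}"

definition GN_vertices :: "('a,'b) monoid_scheme \<Rightarrow> 'a set \<Rightarrow> ('a triple \<Rightarrow> 'a set)
    \<Rightarrow> ('a triple \<Rightarrow> ('a \<Rightarrow> complex) set) \<Rightarrow> 'a triple set" where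
  "GN_vertices G N cA Rep = {v. N_linear_triple G N v \<and> (root_triple G N, v) \<in> (Cl_edges G N cA Rep)\<^sup>*}"

definition GN_edges :: "('a,'b) monoid_scheme \<Rightarrow> 'a set \<Rightarrow> ('a triple \<Rightarrow> 'a set)
    \<Rightarrow> ('a triple \<Rightarrow> ('a \<Rightarrow> complex) set) \<Rightarrow> ('a triple \<times> 'a triple) set" where
  "GN_edges G N cA Rep = Cl_edges G N cA Rep \<inter> (GN_vertices G N cA Rep \<times> GN_vertices G N cA Rep)"

definition GN_path :: "('a,'b) monoid_scheme \<Rightarrow> 'a set \<Rightarrow> ('a triple \<Rightarrow> 'a set)
    \<Rightarrow> ('a triple \<Rightarrow> ('a \<Rightarrow> complex) set) \<Rightarrow> 'a triple \<Rightarrow> 'a triple \<Rightarrow> 'a triple list \<Rightarrow> bool" where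
  "GN_path G N cA Rep u v p \<longleftrightarrow> p \<noteq> [] \<and> hd p = u \<and> last p = v \<and> distinct p \<and>
     set p \<subseteq> GN_vertices G N cA Rep \<and>
     (\<forall>i. Suc i < length p \<longrightarrow> (p ! i, p ! Suc i) \<in> GN_edges G N cA Rep)"

end

theory Submission
  imports Defs "HOL-Library.Transitive_Closure_Table"
begin

lemma child_form:
  assumes adm: "admissible_choice G N cA Rep"
    and e: "(u, v) \<in> Cl_edges G N cA Rep"
  shows "\<exists>\<phi>. v = (inertia G (fst u) (cA u) \<phi>, cA u, \<phi>) \<and> lin_char G (cA u) \<phi> \<and>
     fst (snd u) \<subseteq> cA u \<and> (\<forall>b\<in>fst (snd u). \<phi> b = snd (snd u) b)"
proof -
  obtain H A \<theta> where u: "u = (H, A, \<theta>)" by (cases u) auto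
  from e have nl: "N_linear_triple G N u" and vc: "v \<in> Cl G cA Rep u"
    unfolding Cl_edges_def by auto
  from vc have "H \<noteq> A" unfolding Cl_def u by (auto split: if_splits)
  with vc obtain \<phi> where v: "v = (inertia G H (cA u) \<phi>, cA u, \<phi>)" and ph: "\<phi> \<in> Rep u"
    unfolding Cl_def u by auto
  from adm nl have "orbit_reps G H A \<theta> (cA u) (Lin_tilde G N A (cA u) \<theta>) (Rep u)"
    unfolding admissible_choice_def u by auto
  then have "Rep u \<subseteq> Lin_tilde G N A (cA u) \<theta>" unfolding orbit_reps_def by auto
  with ph have "\<phi> \<in> Lin_tilde G N A (cA u) \<theta>" by auto
  then show ?thesis using v u unfolding Lin_tilde_def by auto
qed

lemma propagate:
  assumes adm: "admissible_choice G N cA Rep"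
    and cons: "\<forall>i. Suc i < length p \<longrightarrow> (p ! i, p ! Suc i) \<in> Cl_edges G N cA Rep"
    and kj: "k \<le> j" and jl: "j < length p"
  shows "fst (snd (p ! k)) \<subseteq> fst (snd (p ! j)) \<and>
    (\<forall>a\<in>fst (snd (p ! k)). snd (snd (p ! j)) a = snd (snd (p ! k)) a)"
  using kj jl
proof (induction j)
  case 0
  then show ?case by auto
next
  case (Suc j)
  show ?case
  proof (cases "k = Suc j")
    case True
    then show ?thesis by auto
  next
    case False
    with Suc have ih: "fst (snd (p ! k)) \<subseteq> fst (snd (p ! j)) \<and>
      (\<forall>a\<in>fst (snd (p ! k)). snd (snd (p ! j)) a = snd (snd (p ! k)) a)" by auto
    from cons Suc.prems have "(p ! j, p ! Suc j) \<in> Cl_edges G N cA Rep" by auto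
    from child_form[OF adm this] obtain \<phi> where
      "p ! Suc j = (inertia G (fst (p ! j)) (cA (p ! j)) \<phi>, cA (p ! j), \<phi>)"
      "fst (snd (p ! j)) \<subseteq> cA (p ! j)" "\<forall>b\<in>fst (snd (p ! j)). \<phi> b = snd (snd (p ! j)) b"
      by blast
    with ih show ?thesis by auto
  qed
qed

lemma agree:
  assumes adm: "admissible_choice G N cA Rep"
    and p: "GN_path G N cA Rep u v p" and q: "GN_path G N cA Rep u v q"
  shows "\<forall>i. i < length p \<longrightarrow> i < length q \<and> p ! i = q ! i"
proof (intro allI)
  fix i
  have consp: "\<forall>i. Suc i < length p \<longrightarrow> (p ! i, p ! Suc i) \<in> Cl_edges G N cA Rep"
    using p unfolding GN_path_def GN_edges_def by auto
  have consq: "\<forall>i. Suc i < length q \<longrightarrow> (q ! i, q ! Suc i) \<in> Cl_edges G N cA Rep"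
    using q unfolding GN_path_def GN_edges_def by auto
  have pne: "p \<noteq> []" and qne: "q \<noteq> []" using p q unfolding GN_path_def by auto
  have lp: "p ! (length p - 1) = v" using p pne unfolding GN_path_def by (simp add: last_conv_nth)
  have lq: "q ! (length q - 1) = v" using q qne unfolding GN_path_def by (simp add: last_conv_nth)
  have dp: "distinct p" using p unfolding GN_path_def by auto
  show "i < length p \<longrightarrow> i < length q \<and> p ! i = q ! i"
  proof (induction i)
    case 0
    then show ?case using p q pne qne unfolding GN_path_def by (simp add: hd_conv_nth)
  next
    case (Suc i)
    show ?case
    proof
      assume si: "Suc i < length p"
      with Suc.IH have iq: "i < length q" and eq: "p ! i = q ! i" by auto
      show "Suc i < length q \<and> p ! Suc i = q ! Suc i"
      proof (cases "Suc i < length q")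
        case False
        with iq have "length q - 1 = i" by auto
        with lq eq have "p ! i = v" by auto
        with lp have "p ! i = p ! (length p - 1)" by simp
        moreover have "i \<noteq> length p - 1" using si by auto
        moreover have "length p - 1 < length p" using si by auto
        ultimately have False using si nth_eq_iff_index_eq[OF dp, of i "length p - 1"] by auto
        then show ?thesis by simp
      next
        case True
        have ep: "(p ! i, p ! Suc i) \<in> Cl_edges G N cA Rep" using consp si by auto
        have eqq: "(p ! i, q ! Suc i) \<in> Cl_edges G N cA Rep" using consq True eq by auto
        from child_form[OF adm ep] obtain \<phi> where
          ph: "p ! Suc i = (inertia G (fst (p ! i)) (cA (p ! i)) \<phi>, cA (p ! i), \<phi>)"
              "lin_char G (cA (p ! i)) \<phi>" by blast
        from child_form[OF adm eqq] obtain \<psi> where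
          ps: "q ! Suc i = (inertia G (fst (p ! i)) (cA (p ! i)) \<psi>, cA (p ! i), \<psi>)"
              "lin_char G (cA (p ! i)) \<psi>" by blast
        have A1: "\<forall>a\<in>fst (snd (p ! Suc i)). snd (snd (p ! (length p - 1))) a = snd (snd (p ! Suc i)) a"
          using propagate[OF adm consp, of "Suc i" "length p - 1"] si by auto
        have A2: "\<forall>a\<in>fst (snd (q ! Suc i)). snd (snd (q ! (length q - 1))) a = snd (snd (q ! Suc i)) a"
          using propagate[OF adm consq, of "Suc i" "length q - 1"] True by auto
        have "\<phi> = \<psi>"
        proof
          fix x
          show "\<phi> x = \<psi> x"
          proof (cases "x \<in> cA (p ! i)")
            case True
            then show ?thesis using A1 A2 ph ps lp lq by auto
          next
            case False
            then show ?thesis using ph(2) ps(2) unfolding lin_char_def by auto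
          qed
        qed
        then show ?thesis using ph ps True by auto
      qed
    qed
  qed
qed

lemma path_props:
  assumes "rtrancl_path r x xs y"
  shows "(\<forall>i. Suc i < length (x # xs) \<longrightarrow> r ((x # xs) ! i) ((x # xs) ! Suc i)) \<and> last (x # xs) = y"
  using assms
proof (induction)
  case (base x)
  then show ?case by auto
next
  case (step x y ys z)
  have "\<forall>i. Suc i < length (x # y # ys) \<longrightarrow> r ((x # y # ys) ! i) ((x # y # ys) ! Suc i)"
  proof (intro allI impI)
    fix i assume "Suc i < length (x # y # ys)"
    then show "r ((x # y # ys) ! i) ((x # y # ys) ! Suc i)"
      using step by (cases i) auto
  qed
  then show ?case using step by auto
qed

theorem lemma1:
  fixes G :: "('a, 'b) monoid_scheme" and N :: "'a set"
    and cA :: "'a triple \<Rightarrow> 'a set" and Rep :: "'a triple \<Rightarrow> ('a \<Rightarrow> complex) set"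
  assumes "class_C G"
    and "N \<lhd> G"
    and "admissible_choice G N cA Rep"
    and "v \<in> GN_vertices G N cA Rep"
  shows "\<exists>!p. GN_path G N cA Rep (root_triple G N) v p"
proof -
  let ?E = "Cl_edges G N cA Rep"
  let ?r = "\<lambda>x y. (x, y) \<in> ?E"
  let ?R = "root_triple G N"
  have vN: "N_linear_triple G N v" and reach: "(?R, v) \<in> ?E\<^sup>*"
    using assms(4) unfolding GN_vertices_def by auto
  from reach have "?r\<^sup>*\<^sup>* ?R v" by (simp add: rtrancl_def)
  then obtain xs where "rtrancl_path ?r ?R xs v" using rtranclp_eq_rtrancl_path by metis
  then obtain ys where yp: "rtrancl_path ?r ?R ys v" and dy: "distinct (?R # ys)"
    by (rule rtrancl_path_distinct)
  define p where "p = ?R # ys"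
  from path_props[OF yp] have cons: "\<forall>i. Suc i < length p \<longrightarrow> (p ! i, p ! Suc i) \<in> ?E"
    and lst: "last p = v" unfolding p_def by auto
  have reachi: "i < length p \<Longrightarrow> (?R, p ! i) \<in> ?E\<^sup>*" for i
  proof (induction i)
    case 0 then show ?case by (simp add: p_def)
  next
    case (Suc i)
    then have "(?R, p ! i) \<in> ?E\<^sup>*" by auto
    moreover have "(p ! i, p ! Suc i) \<in> ?E" using cons Suc.prems by auto
    ultimately show ?case by (rule rtrancl_into_rtrancl)
  qed
  have nli: "i < length p \<Longrightarrow> N_linear_triple G N (p ! i)" for i
  proof (cases "Suc i < length p")
    case True
    then show ?thesis using cons unfolding Cl_edges_def by auto
  next
    case False
    assume "i < length p"
    with False have "i = length p - 1" by auto
    moreover have "p \<noteq> []" by (simp add: p_def)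
    ultimately have "p ! i = v" using lst by (simp add: last_conv_nth)
    then show ?thesis using vN by simp
  qed
  have vert: "i < length p \<Longrightarrow> p ! i \<in> GN_vertices G N cA Rep" for i
    using reachi nli unfolding GN_vertices_def by auto
  have P: "GN_path G N cA Rep ?R v p"
    unfolding GN_path_def
  proof (intro conjI allI impI)
    show "p \<noteq> []" "hd p = ?R" by (auto simp: p_def)
    show "last p = v" by (rule lst)
    show "distinct p" using dy by (simp add: p_def)
    show "set p \<subseteq> GN_vertices G N cA Rep" using vert by (metis in_set_conv_nth subsetI)
    fix i assume "Suc i < length p"
    then show "(p ! i, p ! Suc i) \<in> GN_edges G N cA Rep"
      using cons vert unfolding GN_edges_def by auto
  qed
  show ?thesis
  proof (rule ex1I[of _ p])
    show "GN_path G N cA Rep ?R v p" by (rule P)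
    fix q assume Q: "GN_path G N cA Rep ?R v q"
    have a1: "\<forall>i. i < length q \<longrightarrow> i < length p \<and> q ! i = p ! i"
      by (rule agree[OF assms(3) Q P])
    have a2: "\<forall>i. i < length p \<longrightarrow> i < length q \<and> p ! i = q ! i"
      by (rule agree[OF assms(3) P Q])
    have "length q = length p"
    proof (rule antisym)
      show "length q \<le> length p"
        using a1 Q unfolding GN_path_def by (metis diff_less length_greater_0_conv less_numeral_extra(1) not_le_imp_less le_less_trans less_imp_le_nat Suc_pred' not_less_eq)
      show "length p \<le> length q"
        using a2 P unfolding GN_path_def by (metis diff_less length_greater_0_conv less_numeral_extra(1) not_le_imp_less le_less_trans less_imp_le_nat Suc_pred' not_less_eq)
    qed
    then show "q = p" using a1 by (auto intro: nth_equalityI)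
  qed
qed

end
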